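(* Let $m,n \in \mathbb{N}$ with $n \geq m$. Let $\Xi = [0,1]\times\Pi$ and let $\Gamma$ be the inverse-transform decoder and $d$ the single-token covariance cost defined in the context. Let $\xi,\xi'$ be i.i.d. uniform on $\Xi^n$ (i.e., all $2n$ coordinates $(u,\pi)$ i.i.d. with $u \sim \mathrm{Unif}([0,1])$ and $\pi$ uniform on $\Pi$, independently), and let $Y = \mathtt{generate}(\xi;m,p,\Gamma)$. Then almost surely, for all $i \in [m]$ and $j \in [n]$, $$\mathbb{E}[d(Y_i,\xi_j') - d(Y_i,\xi_i) \mid Y] = C_0\,(1 - p(Y_i \mid Y_{:i-1})).$$
   Context: Vocabulary $\mathcal{V} = [N]$; $\Pi$ is the set of permutations of $[N]$. A language model $p : [N]^* \to \Delta([N])$ gives next-token distributions $p(\cdot \mid x)$; $y_{:i-1} = (y_1,\dots,y_{i-1})$. Decoder: $\Gamma((u,\pi),\mu) := \pi^{-1}(\min\{\pi(i) : \mu(\{j : \pi(j)\le \pi(i)\}) \geq u\})$. $\mathtt{generate}(\xi;m,p,\Gamma)$ for $\xi \in \Xi^n$ outputs $y \in [N]^m$ with $y_i = \Gamma(\xi_i, p(\cdot \mid y_{:i-1}))$, $i=1,\dots,m$. Let $\eta(i) := (i-1)/(N-1)$. For a token $y$ and $(u,\pi) \in \Xi$, $d(y,(u,\pi)) := -(u - 1/2)(\eta(\pi(y)) - 1/2)$. $C_0 := \mathrm{Var}(\eta(I))$ where $I$ is uniform on $[N]$. *)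

theory Defs
  imports "HOL-Probability.Probability" "HOL-Combinatorics.Permutations"
begin

text \<open>Vocabulary [N] = {1..N}; a key is (u, pi) with u a real and pi a permutation of {1..N}.\<close>

type_synonym key = "real \<times> (nat \<Rightarrow> nat)"

definition perms :: "nat \<Rightarrow> (nat \<Rightarrow> nat) set" where
  "perms N = {\<pi>. \<pi> permutes {1..N}}"

definition decode :: "nat \<Rightarrow> key \<Rightarrow> nat pmf \<Rightarrow> nat" where
  "decode N \<xi> \<mu> = (case \<xi> of (u, \<pi>) \<Rightarrow>
     inv_into {1..N} \<pi>
       (Min {\<pi> i | i. i \<in> {1..N} \<and>
                measure_pmf.prob \<mu> {j \<in> {1..N}. \<pi> j \<le> \<pi> i} \<ge> u}))"

text \<open>generate: the first k tokens; keys are indexed 1..n, token y_i uses key xi i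
  and the distribution p(. | y_{:i-1}).\<close>
fun gen :: "nat \<Rightarrow> (nat list \<Rightarrow> nat pmf) \<Rightarrow> (nat \<Rightarrow> key) \<Rightarrow> nat \<Rightarrow> nat list" where
  "gen N p \<xi> 0 = []"
| "gen N p \<xi> (Suc k) = gen N p \<xi> k @ [decode N (\<xi> (Suc k)) (p (gen N p \<xi> k))]"

definition eta :: "nat \<Rightarrow> nat \<Rightarrow> real" where
  "eta N i = (real i - 1) / (real N - 1)"

definition dcost :: "nat \<Rightarrow> nat \<Rightarrow> key \<Rightarrow> real" where
  "dcost N y \<xi> = (case \<xi> of (u, \<pi>) \<Rightarrow> - (u - 1/2) * (eta N (\<pi> y) - 1/2))"

definition C0 :: "nat \<Rightarrow> real" where
  "C0 N = measure_pmf.variance (pmf_of_set {1..N}) (eta N)"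

definition key_measure :: "nat \<Rightarrow> key measure" where
  "key_measure N = uniform_measure lborel {0..1} \<Otimes>\<^sub>M measure_pmf (pmf_of_set (perms N))"

definition keys_measure :: "nat \<Rightarrow> nat \<Rightarrow> (nat \<Rightarrow> key) measure" where
  "keys_measure N n = PiM {1..n} (\<lambda>_. key_measure N)"

end

theory Submission
  imports Defs
begin


lemma perms_finite: "finite (perms N)"
  unfolding perms_def by (simp add: finite_permutations)

lemma card_perms: "card (perms N) = fact N"
  unfolding perms_def by (simp add: card_permutations)

lemma sum_perms_comp_transpose:
  assumes "a \<in> {1..N}" "b \<in> {1..N}"
  shows "(\<Sum>\<pi>\<in>perms N. F (\<pi> \<circ> Transposition.transpose a b)) = (\<Sum>\<pi>\<in>perms N. F \<pi>)"
proof (rule sum.reindex_bij_betw)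
  let ?t = "Transposition.transpose a b"
  have t: "?t permutes {1..N}" using assms by (simp add: permutes_swap_id)
  show "bij_betw (\<lambda>\<pi>. \<pi> \<circ> ?t) (perms N) (perms N)"
  proof (rule bij_betw_byWitness[where f'="\<lambda>\<pi>. \<pi> \<circ> ?t"])
    show "\<forall>x\<in>perms N. x \<circ> ?t \<circ> ?t = x" by (simp add: comp_assoc)
    show "\<forall>x\<in>perms N. x \<circ> ?t \<circ> ?t = x" by (simp add: comp_assoc)
    show "(\<lambda>\<pi>. \<pi> \<circ> ?t) ` perms N \<subseteq> perms N" using t
      by (auto simp: perms_def intro: permutes_compose)
    show "(\<lambda>\<pi>. \<pi> \<circ> ?t) ` perms N \<subseteq> perms N" using t
      by (auto simp: perms_def intro: permutes_compose)
  qed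
qed

lemma sum_perms_single:
  fixes G :: "nat \<Rightarrow> real"
  assumes "a \<in> {1..N}"
  shows "(\<Sum>\<pi>\<in>perms N. G (\<pi> a)) = fact (N - 1) * (\<Sum>k\<in>{1..N}. G k)"
proof -
  have N: "N \<ge> 1" using assms by auto
  have eq: "(\<Sum>\<pi>\<in>perms N. G (\<pi> b)) = (\<Sum>\<pi>\<in>perms N. G (\<pi> a))" if "b \<in> {1..N}" for b
    using sum_perms_comp_transpose[OF assms that, of "\<lambda>\<pi>. G (\<pi> b)"] by simp
  have "real N * (\<Sum>\<pi>\<in>perms N. G (\<pi> a)) = (\<Sum>b\<in>{1..N}. \<Sum>\<pi>\<in>perms N. G (\<pi> b))"
    using eq by (simp add: sum.cong[of "{1..N}" "{1..N}" "\<lambda>b. \<Sum>\<pi>\<in>perms N. G (\<pi> b)" "\<lambda>_. \<Sum>\<pi>\<in>perms N. G (\<pi> a)"])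
  also have "\<dots> = (\<Sum>\<pi>\<in>perms N. \<Sum>b\<in>{1..N}. G (\<pi> b))" by (rule sum.swap)
  also have "\<dots> = (\<Sum>\<pi>\<in>perms N. \<Sum>k\<in>{1..N}. G k)"
  proof (rule sum.cong[OF refl])
    fix \<pi> assume "\<pi> \<in> perms N"
    then have "bij_betw \<pi> {1..N} {1..N}" by (simp add: perms_def permutes_imp_bij)
    then show "(\<Sum>b\<in>{1..N}. G (\<pi> b)) = (\<Sum>k\<in>{1..N}. G k)"
      by (rule sum.reindex_bij_betw)
  qed
  also have "\<dots> = fact N * (\<Sum>k\<in>{1..N}. G k)" by (simp add: card_perms)
  also have "fact N = real N * fact (N - 1)" using N
    by (simp add: fact_reduce)
  finally show ?thesis using N by simp
qed



lemma sum_perms_pair: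
  assumes "y \<in> {1..N}" "j \<in> {1..N}" "j' \<in> {1..N}" "j \<noteq> y" "j' \<noteq> y"
  shows "(\<Sum>\<pi>\<in>perms N. H (\<pi> y) (\<pi> j)) = (\<Sum>\<pi>\<in>perms N. H (\<pi> y) (\<pi> j'))"
proof -
  have "(\<Sum>\<pi>\<in>perms N. H (\<pi> y) (\<pi> j')) =
        (\<Sum>\<pi>\<in>perms N. (\<lambda>\<sigma>. H (\<sigma> y) (\<sigma> j)) (\<pi> \<circ> Transposition.transpose j j'))"
    using assms by (intro sum.cong) (auto simp: Transposition.transpose_def)
  also have "\<dots> = (\<Sum>\<pi>\<in>perms N. H (\<pi> y) (\<pi> j))"
    by (rule sum_perms_comp_transpose[OF assms(2,3)])
  finally show ?thesis by simp
qed

lemma count_below: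
  assumes "\<pi> \<in> perms N" "y \<in> {1..N}"
  shows "(\<Sum>j\<in>{1..N}. (if \<pi> j < \<pi> y then 1 else 0 :: real)) = real (\<pi> y - 1)"
proof -
  have p: "\<pi> permutes {1..N}" using assms by (simp add: perms_def)
  have inj: "inj_on \<pi> {1..N}" using p permutes_inj_on by blast
  have img: "\<pi> ` {1..N} = {1..N}" using p permutes_image by blast
  have "(\<Sum>j\<in>{1..N}. (if \<pi> j < \<pi> y then 1 else 0 :: real)) = real (card ({1..N} \<inter> {j. \<pi> j < \<pi> y}))"
    by (simp add: sum.If_cases)
  also have "{1..N} \<inter> {j. \<pi> j < \<pi> y} = {j\<in>{1..N}. \<pi> j < \<pi> y}" by auto
  also have "card {j\<in>{1..N}. \<pi> j < \<pi> y} = card (\<pi> ` {j\<in>{1..N}. \<pi> j < \<pi> y})"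
    by (rule card_image[symmetric]) (rule inj_on_subset[OF inj], auto)
  also have "\<pi> ` {j\<in>{1..N}. \<pi> j < \<pi> y} = {v\<in>\<pi> ` {1..N}. v < \<pi> y}" by auto
  also have "\<dots> = {1..<\<pi> y}"
  proof -
    have "\<pi> y \<in> {1..N}" using img assms(2) by blast
    then show ?thesis using img by auto
  qed
  finally show ?thesis by simp
qed

lemma sum_km1: "(\<Sum>k\<in>{1..N}. (real k - 1)) = real N * (real N - 1) / 2"
proof (induction N)
  case 0 then show ?case by simp
next
  case (Suc N) then show ?case by (simp add: field_simps)
qed

lemma sum_eta:
  assumes "N \<ge> 2"
  shows "(\<Sum>k\<in>{1..N}. eta N k) = real N / 2"
proof -
  have "(\<Sum>k\<in>{1..N}. eta N k) = (\<Sum>k\<in>{1..N}. (real k - 1)) / (real N - 1)"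
    by (simp add: eta_def sum_divide_distrib)
  also have "\<dots> = real N * (real N - 1) / 2 / (real N - 1)" by (simp only: sum_km1)
  also have "\<dots> = real N / 2"
  proof -
    have "real N - 1 \<noteq> 0" using assms by simp
    then show ?thesis by (simp add: divide_simps)
  qed
  finally show ?thesis .
qed

lemma sum_h_zero:
  assumes "N \<ge> 2"
  shows "(\<Sum>k\<in>{1..N}. eta N k - 1/2) = 0"
  using sum_eta[OF assms] by (simp add: sum_subtractf)

lemma C0_eq:
  assumes "N \<ge> 2"
  shows "C0 N = (\<Sum>k\<in>{1..N}. (eta N k - 1/2)^2) / real N"
proof -
  have ne: "{1..N} \<noteq> {}" "finite {1..N}" using assms by auto
  have m: "measure_pmf.expectation (pmf_of_set {1..N}) (eta N) = 1/2"
    using integral_pmf_of_set[OF ne, of "eta N"] sum_eta[OF assms] assms by simp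
  show ?thesis unfolding C0_def m
    using integral_pmf_of_set[OF ne, of "\<lambda>x. (eta N x - 1/2)^2"] by simp
qed

lemma key_sum:
  fixes \<mu> :: "nat pmf"
  assumes supp: "set_pmf \<mu> \<subseteq> {1..N}" and y: "y \<in> {1..N}"
  shows "(\<Sum>\<pi>\<in>perms N. (eta N (\<pi> y) - 1/2) *
            ((\<Sum>j\<in>{1..N}. (if \<pi> j < \<pi> y then pmf \<mu> j else 0)) + (pmf \<mu> y - 1)/2))
         = fact N * C0 N * (1 - pmf \<mu> y)"
proof (cases "N = 1")
  case True
  then have y1: "y = 1" using y by auto
  have "pmf \<mu> 1 = 1" using sum_pmf_eq_1[of "{1..N}" \<mu>] supp True by simp
  then show ?thesis using True y1 by simp
next
  case False
  then have N2: "N \<ge> 2" using y by auto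
  define h where "h k = eta N k - 1/2" for k
  define A where "A j = (\<Sum>\<pi>\<in>perms N. (if \<pi> j < \<pi> y then h (\<pi> y) else 0))" for j
  have "(if y = 1 then 2 else 1) \<in> {1..N} \<and> (if y = 1 then 2 else 1::nat) \<noteq> y" using N2 by auto
  then obtain j0 where j0: "j0 \<in> {1..N}" "j0 \<noteq> y" by blast
  have Aeq: "A j = A j0" if "j \<in> {1..N}" "j \<noteq> y" for j
    unfolding A_def
    using sum_perms_pair[OF y that(1) j0(1) that(2) j0(2), of "\<lambda>a b. if b < a then h a else 0"]
    by simp
  have Ay: "A y = 0" unfolding A_def by simp
  have "(\<Sum>j\<in>{1..N}. A j) = (\<Sum>\<pi>\<in>perms N. \<Sum>j\<in>{1..N}. (if \<pi> j < \<pi> y then h (\<pi> y) else 0))"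
    unfolding A_def by (rule sum.swap)
  also have "\<dots> = (\<Sum>\<pi>\<in>perms N. h (\<pi> y) * real (\<pi> y - 1))"
  proof (rule sum.cong[OF refl])
    fix \<pi> assume p: "\<pi> \<in> perms N"
    have "(\<Sum>j\<in>{1..N}. (if \<pi> j < \<pi> y then h (\<pi> y) else 0)) =
          h (\<pi> y) * (\<Sum>j\<in>{1..N}. (if \<pi> j < \<pi> y then 1 else 0 :: real))"
      by (simp add: sum_distrib_left if_distrib cong: if_cong)
    then show "(\<Sum>j\<in>{1..N}. (if \<pi> j < \<pi> y then h (\<pi> y) else 0)) = h (\<pi> y) * real (\<pi> y - 1)"
      using count_below[OF p y] by simp
  qed
  also have "\<dots> = fact (N - 1) * (\<Sum>k\<in>{1..N}. h k * real (k - 1))"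
    by (rule sum_perms_single[OF y, of "\<lambda>k. h k * real (k - 1)"])
  finally have sumA: "(\<Sum>j\<in>{1..N}. A j) = fact (N - 1) * (\<Sum>k\<in>{1..N}. h k * real (k - 1))" .
  have "(\<Sum>j\<in>{1..N}. A j) = (\<Sum>j\<in>{1..N} - {y}. A j) + A y"
    using y by (simp add: sum.remove add.commute)
  also have "\<dots> = real (N - 1) * A j0" using Ay y Aeq by simp
  finally have A0: "real (N - 1) * A j0 = fact (N - 1) * (\<Sum>k\<in>{1..N}. h k * real (k - 1))"
    using sumA by simp
  have "(\<Sum>k\<in>{1..N}. h k * real (k - 1)) = real (N - 1) * (\<Sum>k\<in>{1..N}. h k * eta N k)"
    using N2 by (simp add: sum_distrib_left eta_def of_nat_diff)
  then have A0': "A j0 = fact (N - 1) * (\<Sum>k\<in>{1..N}. h k * eta N k)"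
    using A0 N2 by simp
  have "(\<Sum>k\<in>{1..N}. h k * eta N k) = (\<Sum>k\<in>{1..N}. (eta N k - 1/2)^2) + (\<Sum>k\<in>{1..N}. h k) / 2"
  proof -
    have "(\<Sum>k\<in>{1..N}. h k * eta N k) = (\<Sum>k\<in>{1..N}. (eta N k - 1/2)^2 + h k / 2)"
      by (rule sum.cong) (simp_all add: h_def power2_eq_square field_simps)
    then show ?thesis by (simp add: sum.distrib sum_divide_distrib)
  qed
  also have "\<dots> = real N * C0 N" using C0_eq[OF N2] sum_h_zero[OF N2] N2 unfolding h_def by simp
  finally have A0'': "A j0 = fact N * C0 N"
    using A0' N2 by (simp add: fact_reduce[of N])
  have sum_mu: "(\<Sum>j\<in>{1..N}. pmf \<mu> j) = 1" using sum_pmf_eq_1[of "{1..N}" \<mu>] supp by simp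
  have "(\<Sum>\<pi>\<in>perms N. h (\<pi> y) * (\<Sum>j\<in>{1..N}. (if \<pi> j < \<pi> y then pmf \<mu> j else 0)))
        = (\<Sum>j\<in>{1..N}. pmf \<mu> j * A j)"
    unfolding A_def by (simp add: sum_distrib_left sum_distrib_right if_distrib sum.swap[of _ "perms N"] mult_ac cong: if_cong)
  also have "\<dots> = (\<Sum>j\<in>{1..N} - {y}. pmf \<mu> j * A j)"
    using y Ay by (simp add: sum.remove)
  also have "\<dots> = (\<Sum>j\<in>{1..N} - {y}. pmf \<mu> j) * A j0"
    using Aeq by (simp add: sum_distrib_right)
  also have "(\<Sum>j\<in>{1..N} - {y}. pmf \<mu> j) = 1 - pmf \<mu> y"
    using sum_mu y by (simp add: sum_diff1)
  finally have part1: "(\<Sum>\<pi>\<in>perms N. h (\<pi> y) * (\<Sum>j\<in>{1..N}. (if \<pi> j < \<pi> y then pmf \<mu> j else 0)))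
        = (1 - pmf \<mu> y) * (fact N * C0 N)" using A0'' by simp
  have part2: "(\<Sum>\<pi>\<in>perms N. h (\<pi> y) * ((pmf \<mu> y - 1)/2)) = 0"
  proof -
    have "(\<Sum>\<pi>\<in>perms N. h (\<pi> y)) = 0"
      using sum_perms_single[OF y, of h] sum_h_zero[OF N2] unfolding h_def by simp
    then show ?thesis by (metis mult_zero_left sum_distrib_right)
  qed
  have "(\<Sum>\<pi>\<in>perms N. (eta N (\<pi> y) - 1/2) *
            ((\<Sum>j\<in>{1..N}. (if \<pi> j < \<pi> y then pmf \<mu> j else 0)) + (pmf \<mu> y - 1)/2))
      = (\<Sum>\<pi>\<in>perms N. h (\<pi> y) * (\<Sum>j\<in>{1..N}. (if \<pi> j < \<pi> y then pmf \<mu> j else 0)))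
        + (\<Sum>\<pi>\<in>perms N. h (\<pi> y) * ((pmf \<mu> y - 1)/2))"
    unfolding h_def by (simp add: distrib_left sum.distrib)
  then show ?thesis using part1 part2 by simp
qed



definition cum :: "nat \<Rightarrow> nat pmf \<Rightarrow> (nat \<Rightarrow> nat) \<Rightarrow> nat \<Rightarrow> real" where
  "cum N \<mu> \<pi> i = measure_pmf.prob \<mu> {j\<in>{1..N}. \<pi> j \<le> \<pi> i}"

definition Sb :: "nat \<Rightarrow> nat pmf \<Rightarrow> (nat \<Rightarrow> nat) \<Rightarrow> nat \<Rightarrow> real" where
  "Sb N \<mu> \<pi> y = measure_pmf.prob \<mu> {j\<in>{1..N}. \<pi> j < \<pi> y}"

lemma decode_unfold:
  "decode N (u, \<pi>) \<mu> = inv_into {1..N} \<pi> (Min (\<pi> ` {i\<in>{1..N}. u \<le> cum N \<mu> \<pi> i}))"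
proof -
  have "{\<pi> i | i. i \<in> {1..N} \<and> measure_pmf.prob \<mu> {j \<in> {1..N}. \<pi> j \<le> \<pi> i} \<ge> u}
        = \<pi> ` {i\<in>{1..N}. u \<le> cum N \<mu> \<pi> i}"
    by (auto simp: cum_def)
  then show ?thesis by (simp add: decode_def)
qed

lemma cum_le_mono:
  assumes "\<pi> i \<le> \<pi> i'"
  shows "cum N \<mu> \<pi> i \<le> cum N \<mu> \<pi> i'"
  unfolding cum_def using assms
  by (intro measure_pmf.finite_measure_mono) auto

lemma decode_min:
  assumes p: "\<pi> \<in> perms N" and supp: "set_pmf \<mu> \<subseteq> {1..N}" and u: "u \<le> 1" and N: "N \<ge> 1"
  shows "\<exists>i1\<in>{1..N}. decode N (u, \<pi>) \<mu> = i1 \<and> u \<le> cum N \<mu> \<pi> i1 \<and>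
           (\<forall>i\<in>{1..N}. \<pi> i < \<pi> i1 \<longrightarrow> cum N \<mu> \<pi> i < u)"
proof -
  have pp: "\<pi> permutes {1..N}" using p by (simp add: perms_def)
  have inj: "inj_on \<pi> {1..N}" using pp permutes_inj_on by blast
  have img: "\<pi> ` {1..N} = {1..N}" using pp permutes_image by blast
  define B where "B = {i\<in>{1..N}. u \<le> cum N \<mu> \<pi> i}"
  have "N \<in> \<pi> ` {1..N}" using img N by simp
  then obtain i0 where i0: "i0 \<in> {1..N}" "\<pi> i0 = N" by blast
  have "{j\<in>{1..N}. \<pi> j \<le> \<pi> i0} = {1..N}" using img i0 by auto
  then have "cum N \<mu> \<pi> i0 = measure_pmf.prob \<mu> {1..N}" by (simp add: cum_def)
  also have "\<dots> = 1" using supp sum_pmf_eq_1[of "{1..N}" \<mu>] by (simp add: measure_measure_pmf_finite)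
  finally have "i0 \<in> B" using u i0 by (simp add: B_def)
  then have ne: "\<pi> ` B \<noteq> {}" and fin: "finite (\<pi> ` B)" by (auto simp: B_def)
  have "Min (\<pi> ` B) \<in> \<pi> ` B" using Min_in[OF fin ne] .
  then obtain i1 where i1: "i1 \<in> B" "Min (\<pi> ` B) = \<pi> i1" by auto
  have i1N: "i1 \<in> {1..N}" using i1 by (simp add: B_def)
  have dec: "decode N (u, \<pi>) \<mu> = i1"
    unfolding decode_unfold B_def[symmetric] i1(2) using inv_into_f_f[OF inj i1N] .
  have "cum N \<mu> \<pi> i < u" if "i \<in> {1..N}" "\<pi> i < \<pi> i1" for i
  proof (rule ccontr)
    assume "\<not> cum N \<mu> \<pi> i < u"
    then have "i \<in> B" using that by (simp add: B_def)
    then have "Min (\<pi> ` B) \<le> \<pi> i" using fin by simp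
    then show False using i1 that by simp
  qed
  then show ?thesis using i1N dec i1 by (auto simp: B_def)
qed

lemma decode_range:
  assumes "\<pi> \<in> perms N" "set_pmf \<mu> \<subseteq> {1..N}" "u \<le> 1" "N \<ge> 1"
  shows "decode N (u, \<pi>) \<mu> \<in> {1..N}"
  using decode_min[OF assms] by auto

lemma cum_eq_Sb:
  assumes p: "\<pi> \<in> perms N" and y: "y \<in> {1..N}"
  shows "cum N \<mu> \<pi> y = Sb N \<mu> \<pi> y + pmf \<mu> y"
proof -
  have pp: "\<pi> permutes {1..N}" using p by (simp add: perms_def)
  have inj: "inj_on \<pi> {1..N}" using pp permutes_inj_on by blast
  have "{j\<in>{1..N}. \<pi> j \<le> \<pi> y} = insert y {j\<in>{1..N}. \<pi> j < \<pi> y}"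
    using y inj_on_eq_iff[OF inj _ y] by (auto simp: le_less)
  then show ?thesis unfolding cum_def Sb_def
    by (simp add: measure_measure_pmf_finite)
qed

lemma Sb_nonneg: "Sb N \<mu> \<pi> y \<ge> 0" by (simp add: Sb_def)

lemma cum_le1: "cum N \<mu> \<pi> y \<le> 1" by (simp add: cum_def)

lemma decode_iff:
  assumes p: "\<pi> \<in> perms N" and supp: "set_pmf \<mu> \<subseteq> {1..N}" and y: "y \<in> {1..N}"
    and u: "0 < u" "u \<le> 1"
  shows "decode N (u, \<pi>) \<mu> = y \<longleftrightarrow> Sb N \<mu> \<pi> y < u \<and> u \<le> Sb N \<mu> \<pi> y + pmf \<mu> y"
proof
  have pp: "\<pi> permutes {1..N}" using p by (simp add: perms_def)
  have inj: "inj_on \<pi> {1..N}" using pp permutes_inj_on by blast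
  have img: "\<pi> ` {1..N} = {1..N}" using pp permutes_image by blast
  have N: "N \<ge> 1" using y by simp
  assume dec: "decode N (u, \<pi>) \<mu> = y"
  from decode_min[OF p supp u(2) N] obtain i1 where
    i1: "i1 \<in> {1..N}" "decode N (u, \<pi>) \<mu> = i1" "u \<le> cum N \<mu> \<pi> i1"
        "\<forall>i\<in>{1..N}. \<pi> i < \<pi> i1 \<longrightarrow> cum N \<mu> \<pi> i < u" by blast
  have yi: "i1 = y" using dec i1 by simp
  have le: "u \<le> Sb N \<mu> \<pi> y + pmf \<mu> y" using i1(3) yi cum_eq_Sb[OF p y] by simp
  have "Sb N \<mu> \<pi> y < u"
  proof (cases "\<pi> y = 1")
    case True
    have ge1: "\<pi> j \<ge> 1" if "j \<in> {1..N}" for j using img that by auto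
    have e: "{j\<in>{1..N}. \<pi> j < \<pi> y} = {}"
      using True ge1 by (metis (no_types, lifting) empty_Collect_eq less_one not_less)
    show ?thesis using u unfolding Sb_def e by simp
  next
    case False
    have "\<pi> y \<in> {1..N}" using img y by blast
    then have "\<pi> y - 1 \<in> \<pi> ` {1..N}" using False img by auto
    then obtain i2 where i2: "i2 \<in> {1..N}" "\<pi> i2 = \<pi> y - 1" by auto
    have "{j\<in>{1..N}. \<pi> j \<le> \<pi> i2} = {j\<in>{1..N}. \<pi> j < \<pi> y}"
      using i2 False \<open>\<pi> y \<in> {1..N}\<close> by auto
    then have "cum N \<mu> \<pi> i2 = Sb N \<mu> \<pi> y" by (simp add: cum_def Sb_def)
    moreover have "\<pi> i2 < \<pi> y" using i2 False \<open>\<pi> y \<in> {1..N}\<close> by auto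
    ultimately show ?thesis using i1(4) i2(1) yi by auto
  qed
  then show "Sb N \<mu> \<pi> y < u \<and> u \<le> Sb N \<mu> \<pi> y + pmf \<mu> y" using le by simp
next
  have pp: "\<pi> permutes {1..N}" using p by (simp add: perms_def)
  have inj: "inj_on \<pi> {1..N}" using pp permutes_inj_on by blast
  assume a: "Sb N \<mu> \<pi> y < u \<and> u \<le> Sb N \<mu> \<pi> y + pmf \<mu> y"
  define B where "B = {i\<in>{1..N}. u \<le> cum N \<mu> \<pi> i}"
  have yB: "y \<in> B" using a y cum_eq_Sb[OF p y] by (simp add: B_def)
  have ge: "\<pi> y \<le> \<pi> i" if "i \<in> B" for i
  proof (rule ccontr)
    assume "\<not> \<pi> y \<le> \<pi> i"
    then have "{j\<in>{1..N}. \<pi> j \<le> \<pi> i} \<subseteq> {j\<in>{1..N}. \<pi> j < \<pi> y}" by auto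
    then have "cum N \<mu> \<pi> i \<le> Sb N \<mu> \<pi> y" unfolding cum_def Sb_def
      by (intro measure_pmf.finite_measure_mono) auto
    then show False using that a by (simp add: B_def)
  qed
  have "Min (\<pi> ` B) = \<pi> y"
    by (rule Min_eqI) (use yB ge in \<open>auto simp: B_def\<close>)
  then show "decode N (u, \<pi>) \<mu> = y"
    unfolding decode_unfold B_def[symmetric] using inv_into_f_f[OF inj y] by simp
qed



abbreviation UU :: "real measure" where "UU \<equiv> uniform_measure lborel {0..1::real}"
abbreviation PP :: "nat \<Rightarrow> (nat \<Rightarrow> nat) measure" where "PP N \<equiv> measure_pmf (pmf_of_set (perms N))"

lemma perms_ne: "perms N \<noteq> {}"
  unfolding perms_def using permutes_id by blast

lemma prob_UU: "prob_space UU"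
  by (rule prob_space_uniform_measure) simp_all

lemma prob_K: "prob_space (key_measure N)"
  unfolding key_measure_def
  by (intro prob_space_pair prob_UU measure_pmf.prob_space_axioms)

lemma UU_density: "UU = density lborel (\<lambda>x. ennreal (indicator {0..1::real} x))"
  unfolding uniform_measure_def by (simp add: ennreal_indicator divide_ennreal_def)

lemma UU_integral:
  fixes f :: "real \<Rightarrow> real"
  assumes [measurable]: "f \<in> borel_measurable borel"
  shows "integral\<^sup>L UU f = (\<integral>x. f x * indicator {0..1} x \<partial>lborel)"
  unfolding UU_density
  by (subst integral_density) (auto simp: mult.commute)

lemma meas_thresh:
  fixes c :: "nat \<Rightarrow> real"
  assumes A: "finite A"
  shows "(\<lambda>u::real. {i\<in>A. u \<le> c i}) \<in> borel \<rightarrow>\<^sub>M count_space (Pow A)"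
proof -
  have cnt: "countable (Pow A)" using A by (simp add: countable_finite)
  show ?thesis
    unfolding measurable_count_space_eq_countable[OF cnt]
  proof (intro conjI ballI)
    show "(\<lambda>u. {i \<in> A. u \<le> c i}) \<in> space borel \<rightarrow> Pow A" by auto
    fix B assume "B \<in> Pow A"
    have "(\<lambda>u. {i \<in> A. u \<le> c i}) -` {B} \<inter> space borel = {u. \<forall>i\<in>A. (u \<le> c i) = (i \<in> B)}"
      using \<open>B \<in> Pow A\<close> by auto
    also have "\<dots> \<in> sets borel" by measurable
    finally show "(\<lambda>u. {i \<in> A. u \<le> c i}) -` {B} \<inter> space borel \<in> sets borel" .
  qed
qed

lemma decode_meas_u[measurable]:
  "(\<lambda>u. decode N (u, \<pi>) \<mu>) \<in> borel \<rightarrow>\<^sub>M count_space UNIV"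
proof -
  have "(\<lambda>u. decode N (u, \<pi>) \<mu>) = (\<lambda>B. inv_into {1..N} \<pi> (Min (\<pi> ` B))) \<circ> (\<lambda>u. {i\<in>{1..N}. u \<le> cum N \<mu> \<pi> i})"
    by (simp add: decode_unfold comp_def)
  also have "\<dots> \<in> borel \<rightarrow>\<^sub>M count_space UNIV"
    by (rule measurable_comp[OF meas_thresh measurable_count_space]) simp
  finally show ?thesis .
qed

lemma decode_cong:
  assumes "\<And>i. i \<in> {1..N} \<Longrightarrow> \<pi> i = \<pi>' i"
  shows "decode N (u, \<pi>) \<mu> = decode N (u, \<pi>') \<mu>"
proof -
  have c: "cum N \<mu> \<pi> i = cum N \<mu> \<pi>' i" if "i \<in> {1..N}" for i
    unfolding cum_def using assms that by (intro arg_cong[where f="measure_pmf.prob \<mu>"]) auto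
  have s: "{i\<in>{1..N}. u \<le> cum N \<mu> \<pi> i} = {i\<in>{1..N}. u \<le> cum N \<mu> \<pi>' i}"
    using c by auto
  have im: "\<pi> ` B = \<pi>' ` B" if "B \<subseteq> {1..N}" for B
    using assms that by (auto intro!: image_cong)
  have inv: "inv_into {1..N} \<pi> = inv_into {1..N} \<pi>'"
    unfolding inv_into_def using assms by (intro ext arg_cong[where f=Eps]) auto
  show ?thesis unfolding decode_unfold s inv
    by (subst im) auto
qed

definition lperm :: "nat list \<Rightarrow> nat \<Rightarrow> nat" where
  "lperm l i = l ! (i - 1)"

lemma lperm_restr: "i \<in> {1..N} \<Longrightarrow> lperm (map \<pi> [Suc 0..<Suc N]) i = \<pi> i"
  by (auto simp: lperm_def nth_map simp del: upt_Suc)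

lemma decode_meas[measurable]:
  "(\<lambda>x. decode N x \<mu>) \<in> key_measure N \<rightarrow>\<^sub>M count_space UNIV"
proof -
  have eq: "decode N x \<mu> = decode N (fst x, lperm (map (snd x) [Suc 0..<Suc N])) \<mu>" for x
  proof (cases x)
    case (Pair a b)
    show ?thesis unfolding Pair fst_conv snd_conv
      by (rule decode_cong) (rule lperm_restr[symmetric])
  qed
  have g: "(\<lambda>x. map (snd x) [Suc 0..<Suc N]) \<in> key_measure N \<rightarrow>\<^sub>M count_space UNIV"
    unfolding key_measure_def
    by (rule measurable_compose[OF measurable_snd]) simp
  have "(\<lambda>x. decode N (fst x, lperm (map (snd x) [Suc 0..<Suc N])) \<mu>) \<in> key_measure N \<rightarrow>\<^sub>M count_space UNIV"
    by (rule measurable_compose_countable[where f="\<lambda>l x. decode N (fst x, lperm l) \<mu>", OF _ g])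
       (unfold key_measure_def, rule measurable_compose[OF measurable_fst], simp)
  moreover have "(\<lambda>x. decode N x \<mu>) = (\<lambda>x. decode N (fst x, lperm (map (snd x) [Suc 0..<Suc N])) \<mu>)"
    by (rule ext) (rule eq)
  ultimately show ?thesis by simp
qed

lemma dcost_meas[measurable]:
  "(\<lambda>x. dcost N y x) \<in> borel_measurable (key_measure N)"
proof -
  have eq: "dcost N y x = - (fst x - 1/2) * (eta N (snd x y) - 1/2)" for x
    by (cases x) (simp add: dcost_def)
  have g: "(\<lambda>x. snd x y) \<in> key_measure N \<rightarrow>\<^sub>M count_space UNIV"
    unfolding key_measure_def
    by (rule measurable_compose[OF measurable_snd]) simp
  have "(\<lambda>x. - (fst x - 1/2) * (eta N (snd x y) - 1/2)) \<in> borel_measurable (key_measure N)"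
    by (rule measurable_compose_countable[where f="\<lambda>k x. - (fst x - 1/2) * (eta N k - 1/2)", OF _ g])
       (unfold key_measure_def, measurable)
  then show ?thesis by (simp add: eq)
qed



lemma AE_K_good: "AE \<xi> in key_measure N. fst \<xi> \<in> {0..1} \<and> snd \<xi> \<in> perms N"
proof -
  interpret pair_sigma_finite UU "PP N"
    by (intro pair_sigma_finite.intro prob_space_imp_sigma_finite prob_UU measure_pmf.prob_space_axioms)
  have s: "{x \<in> space (UU \<Otimes>\<^sub>M PP N). fst x \<in> {0..1} \<and> snd x \<in> perms N} \<in> sets (UU \<Otimes>\<^sub>M PP N)"
  proof -
    have "{x \<in> space (UU \<Otimes>\<^sub>M PP N). fst x \<in> {0..1} \<and> snd x \<in> perms N} = {0..1} \<times> perms N"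
      by (auto simp: space_pair_measure)
    also have "\<dots> \<in> sets (UU \<Otimes>\<^sub>M PP N)" by (rule pair_measureI) auto
    finally show ?thesis .
  qed
  have "AE x in UU. AE y in PP N. fst (x, y) \<in> {0..1} \<and> snd (x, y) \<in> perms N"
  proof -
    have a: "AE x in UU. x \<in> {0..1}" by (rule AE_uniform_measureI) auto
    have b: "AE y in PP N. y \<in> perms N"
      by (simp add: AE_measure_pmf_iff set_pmf_of_set perms_finite perms_ne)
    from a show ?thesis by eventually_elim (use b in simp)
  qed
  then show ?thesis unfolding key_measure_def by (rule AE_pair_measure[OF s])
qed

lemma K_integrable:
  fixes F :: "key \<Rightarrow> real"
  assumes [measurable]: "F \<in> borel_measurable (key_measure N)"
    and bnd: "\<And>u \<pi>. u \<in> {0..1} \<Longrightarrow> \<pi> \<in> perms N \<Longrightarrow> \<bar>F (u, \<pi>)\<bar> \<le> B"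
  shows "integrable (key_measure N) F"
proof -
  interpret prob_space "key_measure N" by (rule prob_K)
  show ?thesis
  proof (rule integrable_const_bound[where B=B])
    show "AE x in key_measure N. norm (F x) \<le> B"
      using AE_K_good by eventually_elim (use bnd in \<open>auto simp: prod_eq_iff\<close>)
  qed simp
qed

lemma K_integral:
  fixes F :: "key \<Rightarrow> real"
  assumes "integrable (key_measure N) F"
  shows "integral\<^sup>L (key_measure N) F = (\<Sum>\<pi>\<in>perms N. \<integral>u. F (u, \<pi>) \<partial>UU) / fact N"
proof -
  interpret pair_sigma_finite UU "PP N"
    by (intro pair_sigma_finite.intro prob_space_imp_sigma_finite prob_UU measure_pmf.prob_space_axioms)
  have i: "integrable (UU \<Otimes>\<^sub>M PP N) (case_prod (\<lambda>u \<pi>. F (u, \<pi>)))"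
    using assms by (simp add: key_measure_def)
  have "integral\<^sup>L (key_measure N) F = (\<integral>\<pi>. (\<integral>u. F (u, \<pi>) \<partial>UU) \<partial>PP N)"
    using integral_snd[OF i] by (simp add: key_measure_def)
  also have "\<dots> = (\<Sum>\<pi>\<in>perms N. \<integral>u. F (u, \<pi>) \<partial>UU) / fact N"
    by (subst integral_pmf_of_set[OF perms_ne perms_finite]) (simp add: card_perms)
  finally show ?thesis .
qed

lemma Sb_sum:
  "Sb N \<mu> \<pi> y = (\<Sum>j\<in>{1..N}. (if \<pi> j < \<pi> y then pmf \<mu> j else 0))"
  unfolding Sb_def by (simp add: measure_measure_pmf_finite sum.If_cases Int_def conj_commute)

lemma inner_int:
  fixes g G :: "real \<Rightarrow> real"
  assumes p: "\<pi> \<in> perms N" and supp: "set_pmf \<mu> \<subseteq> {1..N}" and y: "y \<in> {1..N}"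
    and deriv: "\<And>x. DERIV G x :> g x" and cont: "\<And>x. isCont g x"
  shows "(\<integral>u. of_bool (decode N (u, \<pi>) \<mu> = y) * g u \<partial>UU) = G (Sb N \<mu> \<pi> y + pmf \<mu> y) - G (Sb N \<mu> \<pi> y)"
proof -
  define S where "S = Sb N \<mu> \<pi> y"
  define q where "q = pmf \<mu> y"
  have S0: "0 \<le> S" by (simp add: S_def Sb_nonneg)
  have q0: "0 \<le> q" by (simp add: q_def)
  have S1: "S + q \<le> 1" using cum_eq_Sb[OF p y, of \<mu>] cum_le1[of N \<mu> \<pi> y] by (simp add: S_def q_def)
  have gm[measurable]: "g \<in> borel_measurable borel"
    by (intro borel_measurable_continuous_onI continuous_at_imp_continuous_on) (use cont in auto)
  have "(\<integral>u. of_bool (decode N (u, \<pi>) \<mu> = y) * g u \<partial>UU)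
        = (\<integral>u. (of_bool (decode N (u, \<pi>) \<mu> = y) * g u) * indicator {0..1} u \<partial>lborel)"
    by (rule UU_integral) measurable
  also have "\<dots> = (\<integral>u. g u * indicator {S..S+q} u \<partial>lborel)"
  proof (rule integral_cong_AE)
    show "AE u in lborel. of_bool (decode N (u, \<pi>) \<mu> = y) * g u * indicator {0..1} u = g u * indicator {S..S + q} u"
      using AE_lborel_singleton[of 0] AE_lborel_singleton[of S]
    proof eventually_elim
      case (elim u)
      show ?case
      proof (cases "0 < u \<and> u \<le> 1")
        case True
        then show ?thesis using decode_iff[OF p supp y, of u] elim
          by (auto simp: S_def q_def indicator_def)
      next
        case False
        then show ?thesis using elim S0 S1 q0 by (auto simp: indicator_def)
      qed
    qed
  qed measurable
  also have "\<dots> = G (S + q) - G S"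
    using S0 q0 by (intro integral_FTC_Icc_real deriv cont) auto
  finally show ?thesis by (simp add: S_def q_def)
qed



lemma eta_bounds:
  assumes "k \<in> {1..N}"
  shows "0 \<le> eta N k" "eta N k \<le> 1"
  using assms by (auto simp: eta_def divide_simps)

lemma phi_meas[measurable]: "(\<lambda>\<xi>. of_bool (decode N \<xi> \<mu> = y) :: real) \<in> borel_measurable (key_measure N)"
  by measurable

lemma K1:
  assumes supp: "set_pmf \<mu> \<subseteq> {1..N}" and y: "y \<in> {1..N}"
  shows "(\<integral>\<xi>. of_bool (decode N \<xi> \<mu> = y) \<partial>key_measure N) = pmf \<mu> y"
proof -
  have int: "integrable (key_measure N) (\<lambda>\<xi>. of_bool (decode N \<xi> \<mu> = y) :: real)"
    by (rule K_integrable[where B=1]) auto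
  have "((\<integral>\<xi>. of_bool (decode N \<xi> \<mu> = y) \<partial>key_measure N) :: real)
        = (\<Sum>\<pi>\<in>perms N. \<integral>u. of_bool (decode N (u, \<pi>) \<mu> = y) * 1 \<partial>UU) / fact N"
    unfolding K_integral[OF int] by simp
  also have "\<dots> = (\<Sum>\<pi>\<in>perms N. pmf \<mu> y) / fact N"
  proof -
    have "(\<integral>u. of_bool (decode N (u, \<pi>) \<mu> = y) * 1 \<partial>UU) = pmf \<mu> y" if "\<pi> \<in> perms N" for \<pi>
      using inner_int[OF that supp y, of "\<lambda>x. x" "\<lambda>_. 1"] by (auto intro!: derivative_eq_intros)
    then show ?thesis by simp
  qed
  also have "\<dots> = pmf \<mu> y" by (simp add: card_perms)
  finally show ?thesis .
qed

lemma K3: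
  assumes y: "y \<in> {1..N}"
  shows "(\<integral>\<xi>. dcost N y \<xi> \<partial>key_measure N) = 0"
proof -
  have int: "integrable (key_measure N) (dcost N y)"
  proof (rule K_integrable[where B=1])
    fix u :: real and \<pi> assume u: "u \<in> {0..1}" and p: "\<pi> \<in> perms N"
    have "\<pi> y \<in> {1..N}" using permutes_in_image[of \<pi> "{1..N}" y] p y by (simp add: perms_def)
    then have e: "0 \<le> eta N (\<pi> y)" "eta N (\<pi> y) \<le> 1" by (auto intro: eta_bounds)
    have "\<bar>u - 1/2\<bar> \<le> 1" "\<bar>eta N (\<pi> y) - 1/2\<bar> \<le> 1" using u e by auto
    then have "\<bar>u - 1/2\<bar> * \<bar>eta N (\<pi> y) - 1/2\<bar> \<le> 1 * 1" by (intro mult_mono) auto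
    then show "\<bar>dcost N y (u, \<pi>)\<bar> \<le> 1" by (simp add: dcost_def abs_mult abs_minus_commute)
  qed simp
  have "(\<integral>u. dcost N y (u, \<pi>) \<partial>UU) = 0" for \<pi>
  proof -
    define c where "c = eta N (\<pi> y) - 1/2"
    have "(\<integral>u. dcost N y (u, \<pi>) \<partial>UU) = (\<integral>u. (- (u - 1/2) * c) * indicator {0..1} u \<partial>lborel)"
      by (subst UU_integral) (auto simp: dcost_def c_def)
    also have "\<dots> = (- (1^2/2 - 1/2) * c) - (- (0^2/2 - 0/2) * c)"
      by (rule integral_FTC_Icc_real[where F="\<lambda>u. - (u^2/2 - u/2) * c"])
         (auto intro!: derivative_eq_intros simp: field_simps)
    finally show ?thesis by simp
  qed
  then show ?thesis using K_integral[OF int] by simp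
qed

lemma K2:
  assumes supp: "set_pmf \<mu> \<subseteq> {1..N}" and y: "y \<in> {1..N}"
  shows "(\<integral>\<xi>. of_bool (decode N \<xi> \<mu> = y) * dcost N y \<xi> \<partial>key_measure N) = - C0 N * (1 - pmf \<mu> y) * pmf \<mu> y"
proof -
  have int: "integrable (key_measure N) (\<lambda>\<xi>. of_bool (decode N \<xi> \<mu> = y) * dcost N y \<xi>)"
  proof (rule K_integrable[where B=1])
    fix u :: real and \<pi> assume u: "u \<in> {0..1}" and p: "\<pi> \<in> perms N"
    have "\<pi> y \<in> {1..N}" using permutes_in_image[of \<pi> "{1..N}" y] p y by (simp add: perms_def)
    then have e: "0 \<le> eta N (\<pi> y)" "eta N (\<pi> y) \<le> 1" by (auto intro: eta_bounds)
    have "\<bar>u - 1/2\<bar> \<le> 1" "\<bar>eta N (\<pi> y) - 1/2\<bar> \<le> 1" using u e by auto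
    then have "\<bar>u - 1/2\<bar> * \<bar>eta N (\<pi> y) - 1/2\<bar> \<le> 1 * 1" by (intro mult_mono) auto
    then show "\<bar>of_bool (decode N (u, \<pi>) \<mu> = y) * dcost N y (u, \<pi>)\<bar> \<le> 1"
      by (simp add: dcost_def abs_mult abs_minus_commute)
  qed simp
  define q where "q = pmf \<mu> y"
  have inner: "(\<integral>u. of_bool (decode N (u, \<pi>) \<mu> = y) * dcost N y (u, \<pi>) \<partial>UU)
      = - q * ((eta N (\<pi> y) - 1/2) * ((\<Sum>j\<in>{1..N}. (if \<pi> j < \<pi> y then pmf \<mu> j else 0)) + (q - 1)/2))"
    if p: "\<pi> \<in> perms N" for \<pi>
  proof -
    define c where "c = eta N (\<pi> y) - 1/2"
    define S where "S = Sb N \<mu> \<pi> y"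
    have "(\<integral>u. of_bool (decode N (u, \<pi>) \<mu> = y) * dcost N y (u, \<pi>) \<partial>UU)
        = (\<integral>u. of_bool (decode N (u, \<pi>) \<mu> = y) * (- (u - 1/2) * c) \<partial>UU)"
      by (simp add: dcost_def c_def)
    also have "\<dots> = (- ((S + q)^2/2 - (S + q)/2) * c) - (- (S^2/2 - S/2) * c)"
      unfolding S_def q_def
      by (rule inner_int[OF p supp y, where G="\<lambda>u. - (u^2/2 - u/2) * c"])
         (auto intro!: derivative_eq_intros simp: field_simps)
    also have "\<dots> = - q * (c * (S + (q - 1)/2))"
      by (simp add: field_simps power2_eq_square)
    finally show ?thesis by (simp add: c_def S_def Sb_sum)
  qed
  have "(\<integral>\<xi>. of_bool (decode N \<xi> \<mu> = y) * dcost N y \<xi> \<partial>key_measure N)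
      = (\<Sum>\<pi>\<in>perms N. - q * ((eta N (\<pi> y) - 1/2) * ((\<Sum>j\<in>{1..N}. (if \<pi> j < \<pi> y then pmf \<mu> j else 0)) + (q - 1)/2))) / fact N"
    using K_integral[OF int] inner by simp
  also have "\<dots> = - q * (\<Sum>\<pi>\<in>perms N. (eta N (\<pi> y) - 1/2) * ((\<Sum>j\<in>{1..N}. (if \<pi> j < \<pi> y then pmf \<mu> j else 0)) + (q - 1)/2)) / fact N"
    by (simp add: sum_distrib_left)
  also have "\<dots> = - q * (fact N * C0 N * (1 - q)) / fact N"
    using key_sum[OF supp y] by (simp add: q_def)
  also have "\<dots> = - C0 N * (1 - q) * q" by simp
  finally show ?thesis by (simp add: q_def)
qed



lemma gen_length: "length (gen N p \<xi> k) = k"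
  by (induction k) auto

lemma gen_eq_Suc:
  "gen N p \<xi> m = ys \<longleftrightarrow> length ys = m \<and> (\<forall>k<m. decode N (\<xi> (Suc k)) (p (take k ys)) = ys ! k)"
proof (induction m arbitrary: ys)
  case 0
  then show ?case by auto
next
  case (Suc m)
  show ?case
  proof
    assume e: "gen N p \<xi> (Suc m) = ys"
    have "length ys = Suc m" using e gen_length[of N p \<xi> "Suc m"] by simp
    moreover have "decode N (\<xi> (Suc k)) (p (take k ys)) = ys ! k" if "k < Suc m" for k
    proof (cases "k < m")
      case True
      have "decode N (\<xi> (Suc k)) (p (take k (gen N p \<xi> m))) = gen N p \<xi> m ! k"
        using Suc.IH[of "gen N p \<xi> m"] True by simp
      then show ?thesis using e True by (auto simp: nth_append gen_length)
    next
      case False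
      then have "k = m" using that by simp
      then show ?thesis using e by (auto simp: nth_append gen_length)
    qed
    ultimately show "length ys = Suc m \<and> (\<forall>k<Suc m. decode N (\<xi> (Suc k)) (p (take k ys)) = ys ! k)"
      by blast
  next
    assume a: "length ys = Suc m \<and> (\<forall>k<Suc m. decode N (\<xi> (Suc k)) (p (take k ys)) = ys ! k)"
    then obtain zs z where ys: "ys = zs @ [z]" and lz: "length zs = m"
      by (metis length_Suc_conv_rev)
    have "\<forall>k<m. decode N (\<xi> (Suc k)) (p (take k zs)) = zs ! k"
    proof (intro allI impI)
      fix k assume "k < m"
      then show "decode N (\<xi> (Suc k)) (p (take k zs)) = zs ! k"
        using a ys lz by (auto simp: nth_append)
    qed
    then have g: "gen N p \<xi> m = zs" using Suc.IH lz by blast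
    have "decode N (\<xi> (Suc m)) (p zs) = z"
      using a[THEN conjunct2, rule_format, of m] ys lz by (simp add: nth_append)
    then show "gen N p \<xi> (Suc m) = ys" using g ys by simp
  qed
qed

lemma gen_eq:
  "gen N p \<xi> m = ys \<longleftrightarrow> length ys = m \<and>
     (\<forall>k\<in>{1..m}. decode N (\<xi> k) (p (take (k - 1) ys)) = ys ! (k - 1))"
proof -
  have "(\<forall>k<m. decode N (\<xi> (Suc k)) (p (take k ys)) = ys ! k) \<longleftrightarrow>
        (\<forall>k\<in>{1..m}. decode N (\<xi> k) (p (take (k - 1) ys)) = ys ! (k - 1))"
  proof
    assume h: "\<forall>k<m. decode N (\<xi> (Suc k)) (p (take k ys)) = ys ! k"
    show "\<forall>k\<in>{1..m}. decode N (\<xi> k) (p (take (k - 1) ys)) = ys ! (k - 1)"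
    proof
      fix k assume k: "k \<in> {1..m}"
      then have "k - 1 < m" "Suc (k - 1) = k" by auto
      then show "decode N (\<xi> k) (p (take (k - 1) ys)) = ys ! (k - 1)" using h by metis
    qed
  next
    assume h: "\<forall>k\<in>{1..m}. decode N (\<xi> k) (p (take (k - 1) ys)) = ys ! (k - 1)"
    show "\<forall>k<m. decode N (\<xi> (Suc k)) (p (take k ys)) = ys ! k"
    proof (intro allI impI)
      fix k assume "k < m"
      then have "Suc k \<in> {1..m}" by auto
      then show "decode N (\<xi> (Suc k)) (p (take k ys)) = ys ! k" using h by fastforce
    qed
  qed
  then show ?thesis using gen_eq_Suc by blast
qed

lemma gen_range:
  assumes supp: "\<And>xs. set xs \<subseteq> {1..N} \<Longrightarrow> set_pmf (p xs) \<subseteq> {1..N}"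
    and good: "\<And>k. k \<in> {1..n} \<Longrightarrow> fst (\<xi> k) \<le> 1 \<and> snd (\<xi> k) \<in> perms N"
    and N: "N \<ge> 1"
  shows "k \<le> n \<Longrightarrow> set (gen N p \<xi> k) \<subseteq> {1..N}"
proof (induction k)
  case 0 then show ?case by simp
next
  case (Suc k)
  then have IH: "set (gen N p \<xi> k) \<subseteq> {1..N}" by simp
  have g: "fst (\<xi> (Suc k)) \<le> 1" "snd (\<xi> (Suc k)) \<in> perms N" using good[of "Suc k"] Suc.prems by auto
  have "decode N (fst (\<xi> (Suc k)), snd (\<xi> (Suc k))) (p (gen N p \<xi> k)) \<in> {1..N}"
    by (rule decode_range[OF g(2) supp[OF IH] g(1) N])
  then show ?case using IH by simp
qed

lemma gen_meas:
  "k \<le> n \<Longrightarrow> (\<lambda>\<xi>. gen N p \<xi> k) \<in> keys_measure N n \<rightarrow>\<^sub>M count_space UNIV"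
proof (induction k)
  case 0 then show ?case by simp
next
  case (Suc k)
  have IH: "(\<lambda>\<xi>. gen N p \<xi> k) \<in> keys_measure N n \<rightarrow>\<^sub>M count_space UNIV" using Suc by simp
  have c: "(\<lambda>\<xi>. \<xi> (Suc k)) \<in> keys_measure N n \<rightarrow>\<^sub>M key_measure N"
    unfolding keys_measure_def using Suc.prems
    by (intro measurable_component_singleton[where M="\<lambda>_. key_measure N", simplified]) auto
  have "(\<lambda>\<xi>. (\<lambda>l \<xi>. l @ [decode N (\<xi> (Suc k)) (p l)]) (gen N p \<xi> k) \<xi>) \<in> keys_measure N n \<rightarrow>\<^sub>M count_space UNIV"
  proof (rule measurable_compose_countable[OF _ IH])
    fix l :: "nat list"
    have "(\<lambda>\<xi>. decode N (\<xi> (Suc k)) (p l)) \<in> keys_measure N n \<rightarrow>\<^sub>M count_space UNIV"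
      by (rule measurable_compose[OF c decode_meas])
    then show "(\<lambda>\<xi>. l @ [decode N (\<xi> (Suc k)) (p l)]) \<in> keys_measure N n \<rightarrow>\<^sub>M count_space UNIV"
      by (rule measurable_compose[OF _ measurable_count_space])
  qed
  then show ?case by simp
qed



lemma distr_snd:
  assumes A: "prob_space A" and B: "prob_space B"
  shows "distr (A \<Otimes>\<^sub>M B) B snd = B"
proof (intro measure_eqI)
  interpret pair_sigma_finite A B
    by (intro pair_sigma_finite.intro prob_space_imp_sigma_finite A B)
  fix X assume X: "X \<in> sets (distr (A \<Otimes>\<^sub>M B) B snd)"
  from X have "emeasure (distr (A \<Otimes>\<^sub>M B) B snd) X = emeasure (A \<Otimes>\<^sub>M B) (space A \<times> X)"
    by (auto simp add: emeasure_distr space_pair_measure dest: sets.sets_into_space intro!: arg_cong2[where f=emeasure])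
  moreover have X': "X \<in> sets B" using X by simp
  ultimately show "emeasure (distr (A \<Otimes>\<^sub>M B) B snd) X = emeasure B X"
    using prob_space.emeasure_space_1[OF A] sigma_finite_measure.emeasure_pair_measure_Times[OF prob_space_imp_sigma_finite[OF B] sets.top X', of A] by simp
qed simp

lemma pair_prod_integral:
  fixes a :: "'a \<Rightarrow> real" and b :: "'b \<Rightarrow> real"
  assumes A: "prob_space A" and B: "prob_space B"
    and am[measurable]: "a \<in> borel_measurable A" and bm[measurable]: "b \<in> borel_measurable B"
    and ab: "AE x in A. \<bar>a x\<bar> \<le> Ba" and bb: "AE y in B. \<bar>b y\<bar> \<le> Bb"
  shows "(\<integral>\<omega>. a (fst \<omega>) * b (snd \<omega>) \<partial>(A \<Otimes>\<^sub>M B)) = (\<integral>x. a x \<partial>A) * (\<integral>y. b y \<partial>B)"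
proof -
  interpret pair_sigma_finite A B
    by (intro pair_sigma_finite.intro prob_space_imp_sigma_finite A B)
  interpret P: prob_space "A \<Otimes>\<^sub>M B" by (rule prob_space_pair[OF A B])
  have ae1: "AE \<omega> in A \<Otimes>\<^sub>M B. \<bar>a (fst \<omega>)\<bar> \<le> Ba"
    by (rule AE_distrD[OF measurable_fst]) (subst prob_space.distr_pair_fst[OF B], rule ab)
  have ae2: "AE \<omega> in A \<Otimes>\<^sub>M B. \<bar>b (snd \<omega>)\<bar> \<le> Bb"
    by (rule AE_distrD[OF measurable_snd]) (subst distr_snd[OF A B], rule bb)
  have int: "integrable (A \<Otimes>\<^sub>M B) (\<lambda>\<omega>. a (fst \<omega>) * b (snd \<omega>))"
  proof (rule P.integrable_const_bound[where B="Ba * Bb"])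
    show "AE x in A \<Otimes>\<^sub>M B. norm (a (fst x) * b (snd x)) \<le> Ba * Bb"
      using ae1 ae2
    proof eventually_elim
      case (elim x)
      then show ?case by (simp add: abs_mult mult_mono)
    qed
  qed measurable
  have "(\<integral>\<omega>. a (fst \<omega>) * b (snd \<omega>) \<partial>(A \<Otimes>\<^sub>M B)) = (\<integral>x. (\<integral>y. a x * b y \<partial>B) \<partial>A)"
    using integral_fst'[OF int] by simp
  also have "\<dots> = (\<integral>x. a x \<partial>A) * (\<integral>y. b y \<partial>B)" by simp
  finally show ?thesis .
qed

lemma pair_prod_integrable:
  fixes a :: "'a \<Rightarrow> real" and b :: "'b \<Rightarrow> real"
  assumes A: "prob_space A" and B: "prob_space B"
    and am[measurable]: "a \<in> borel_measurable A" and bm[measurable]: "b \<in> borel_measurable B"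
    and ab: "AE x in A. \<bar>a x\<bar> \<le> Ba" and bb: "AE y in B. \<bar>b y\<bar> \<le> Bb"
  shows "integrable (A \<Otimes>\<^sub>M B) (\<lambda>\<omega>. a (fst \<omega>) * b (snd \<omega>))"
proof -
  interpret pair_sigma_finite A B
    by (intro pair_sigma_finite.intro prob_space_imp_sigma_finite A B)
  interpret P: prob_space "A \<Otimes>\<^sub>M B" by (rule prob_space_pair[OF A B])
  have ae1: "AE \<omega> in A \<Otimes>\<^sub>M B. \<bar>a (fst \<omega>)\<bar> \<le> Ba"
    by (rule AE_distrD[OF measurable_fst]) (subst prob_space.distr_pair_fst[OF B], rule ab)
  have ae2: "AE \<omega> in A \<Otimes>\<^sub>M B. \<bar>b (snd \<omega>)\<bar> \<le> Bb"
    by (rule AE_distrD[OF measurable_snd]) (subst distr_snd[OF A B], rule bb)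
  show "integrable (A \<Otimes>\<^sub>M B) (\<lambda>\<omega>. a (fst \<omega>) * b (snd \<omega>))"
  proof (rule P.integrable_const_bound[where B="Ba * Bb"])
    show "AE x in A \<Otimes>\<^sub>M B. norm (a (fst x) * b (snd x)) \<le> Ba * Bb"
      using ae1 ae2
    proof eventually_elim
      case (elim x)
      then show ?case by (simp add: abs_mult mult_mono)
    qed
  qed measurable
qed

lemma prod_of_bool_eq:
  assumes "finite S"
  shows "(\<Prod>k\<in>S. (of_bool (P k) :: real)) = of_bool (\<forall>k\<in>S. P k)"
  using assms by (induction rule: finite_induct) auto

lemma dcost_bound:
  assumes u: "u \<in> {0..1}" and p: "\<pi> \<in> perms N" and y: "y \<in> {1..N}"
  shows "\<bar>dcost N y (u, \<pi>)\<bar> \<le> 1"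
proof -
  have "\<pi> y \<in> {1..N}" using permutes_in_image[of \<pi> "{1..N}" y] p y by (simp add: perms_def)
  then have e: "0 \<le> eta N (\<pi> y)" "eta N (\<pi> y) \<le> 1" by (auto intro: eta_bounds)
  have "\<bar>u - 1/2\<bar> \<le> 1" "\<bar>eta N (\<pi> y) - 1/2\<bar> \<le> 1" using u e by auto
  then have "\<bar>u - 1/2\<bar> * \<bar>eta N (\<pi> y) - 1/2\<bar> \<le> 1 * 1" by (intro mult_mono) auto
  then show ?thesis by (simp add: dcost_def abs_mult abs_minus_commute)
qed

definition good :: "nat \<Rightarrow> key set" where
  "good N = {\<xi>. fst \<xi> \<in> {0..1} \<and> snd \<xi> \<in> perms N}"

lemma dcost_bound':
  assumes "\<xi> \<in> good N" "y \<in> {1..N}"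
  shows "\<bar>dcost N y \<xi>\<bar> \<le> 1"
  using dcost_bound[of "fst \<xi>" "snd \<xi>" N y] assms by (simp add: good_def)

lemma prob_Q: "prob_space (keys_measure N n)"
  unfolding keys_measure_def by (rule prob_space_PiM) (rule prob_K)

lemma AE_Q_good: "AE x in keys_measure N n. \<forall>k\<in>{1..n}. x k \<in> good N"
proof (rule AE_finite_allI)
  fix k assume k: "k \<in> {1..n}"
  show "AE x in keys_measure N n. x k \<in> good N"
    unfolding keys_measure_def
    by (rule AE_PiM_component[OF prob_K k]) (use AE_K_good in \<open>simp add: good_def\<close>)
qed simp

lemma AE_M_good:
  "AE \<omega> in keys_measure N n \<Otimes>\<^sub>M keys_measure N n.
     (\<forall>k\<in>{1..n}. fst \<omega> k \<in> good N) \<and> (\<forall>k\<in>{1..n}. snd \<omega> k \<in> good N)"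
proof -
  have a: "AE \<omega> in keys_measure N n \<Otimes>\<^sub>M keys_measure N n. \<forall>k\<in>{1..n}. fst \<omega> k \<in> good N"
    by (rule AE_distrD[OF measurable_fst]) (subst prob_space.distr_pair_fst[OF prob_Q], rule AE_Q_good)
  have b: "AE \<omega> in keys_measure N n \<Otimes>\<^sub>M keys_measure N n. \<forall>k\<in>{1..n}. snd \<omega> k \<in> good N"
    by (rule AE_distrD[OF measurable_snd]) (subst distr_snd[OF prob_Q prob_Q], rule AE_Q_good)
  from a b show ?thesis by eventually_elim simp
qed

lemma comp_meas:
  assumes "k \<in> {1..n}"
  shows "(\<lambda>x. x k) \<in> keys_measure N n \<rightarrow>\<^sub>M key_measure N"
  unfolding keys_measure_def using assms
  by (intro measurable_component_singleton[where M="\<lambda>_. key_measure N", simplified]) auto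



lemma core:
  fixes N m n :: nat and p :: "nat list \<Rightarrow> nat pmf" and ys :: "nat list" and i j :: nat
  assumes p_supp: "\<And>xs. set xs \<subseteq> {1..N} \<Longrightarrow> set_pmf (p xs) \<subseteq> {1..N}"
    and mn: "m \<le> n" and ys: "length ys = m" "set ys \<subseteq> {1..N}"
    and i: "i \<in> {1..m}" and j: "j \<in> {1..n}"
  shows "(\<integral>\<omega>. indicator {\<omega> \<in> space (keys_measure N n \<Otimes>\<^sub>M keys_measure N n). gen N p (fst \<omega>) m = ys} \<omega> *
            (dcost N (gen N p (fst \<omega>) m ! (i - 1)) (snd \<omega> j) - dcost N (gen N p (fst \<omega>) m ! (i - 1)) (fst \<omega> i))
          \<partial>(keys_measure N n \<Otimes>\<^sub>M keys_measure N n))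
       = C0 N * (1 - pmf (p (take (i - 1) ys)) (ys ! (i - 1))) *
         (\<integral>\<omega>. indicator {\<omega> \<in> space (keys_measure N n \<Otimes>\<^sub>M keys_measure N n). gen N p (fst \<omega>) m = ys} \<omega>
          \<partial>(keys_measure N n \<Otimes>\<^sub>M keys_measure N n))"
proof -
  let ?Q = "keys_measure N n"
  let ?M = "?Q \<Otimes>\<^sub>M ?Q"
  let ?K = "key_measure N"
  define E where "E = {\<omega> \<in> space ?M. gen N p (fst \<omega>) m = ys}"
  define \<mu> where "\<mu> k = p (take (k - 1) ys)" for k
  define yk where "yk k = ys ! (k - 1)" for k
  have in_n: "i \<in> {1..n}" using i mn by auto
  have supp_k: "set_pmf (\<mu> k) \<subseteq> {1..N}" for k
  proof -
    have "set (take (k - 1) ys) \<subseteq> {1..N}"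
      using set_take_subset[of "k - 1" ys] ys(2) by (rule order_trans)
    then show ?thesis unfolding \<mu>_def by (rule p_supp)
  qed
  have y_k: "yk k \<in> {1..N}" if "k \<in> {1..m}" for k
  proof -
    have "k - 1 < length ys" using that ys(1) by auto
    then show ?thesis unfolding yk_def using ys(2) nth_mem by blast
  qed
  interpret PS: product_sigma_finite "\<lambda>_. ?K"
    using prob_space_imp_sigma_finite[OF prob_K] by (simp add: product_sigma_finite_def)
  define \<phi> where "\<phi> k = (if k \<in> {1..m} then (\<lambda>\<xi>. of_bool (decode N \<xi> (\<mu> k) = yk k)) else (\<lambda>_. 1::real))" for k
  define \<Phi> where "\<Phi> x = (\<Prod>k\<in>{1..n}. \<phi> k (x k))" for x :: "nat \<Rightarrow> key"
  have \<phi>_meas[measurable]: "\<phi> k \<in> borel_measurable ?K" for k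
    unfolding \<phi>_def by (cases "k \<in> {1..m}") (simp_all add: phi_meas)
  have \<phi>_bnd: "0 \<le> \<phi> k \<xi> \<and> \<phi> k \<xi> \<le> 1" for k \<xi> unfolding \<phi>_def by auto
  have \<phi>_int: "integrable ?K (\<phi> k)" for k
    by (rule K_integrable[where B=1, OF \<phi>_meas]) (use \<phi>_bnd in auto)
  have \<Phi>_bnd: "\<bar>\<Phi> x\<bar> \<le> 1" for x
  proof -
    have "0 \<le> \<Phi> x" unfolding \<Phi>_def by (intro prod_nonneg) (use \<phi>_bnd in auto)
    moreover have "\<Phi> x \<le> 1" unfolding \<Phi>_def by (intro prod_le_1) (use \<phi>_bnd in auto)
    ultimately show ?thesis by simp
  qed
  have \<Phi>_meas[measurable]: "\<Phi> \<in> borel_measurable ?Q"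
    unfolding \<Phi>_def
    by (rule borel_measurable_prod) (rule measurable_compose[OF comp_meas \<phi>_meas])
  have \<Phi>_eq: "\<Phi> x = of_bool (gen N p x m = ys)" for x
  proof -
    have "\<Phi> x = (\<Prod>k\<in>{1..m}. \<phi> k (x k))"
      unfolding \<Phi>_def using mn by (intro prod.mono_neutral_right) (auto simp: \<phi>_def)
    also have "\<dots> = (\<Prod>k\<in>{1..m}. of_bool (decode N (x k) (\<mu> k) = yk k))"
      by (intro prod.cong) (auto simp: \<phi>_def)
    also have "\<dots> = of_bool (\<forall>k\<in>{1..m}. decode N (x k) (\<mu> k) = yk k)"
      by (rule prod_of_bool_eq) simp
    also have "\<dots> = of_bool (gen N p x m = ys)"
      using gen_eq[of N p x m ys] ys(1) by (simp add: \<mu>_def yk_def)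
    finally show ?thesis .
  qed
  have ind_eq: "indicator E \<omega> = \<Phi> (fst \<omega>)" if "\<omega> \<in> space ?M" for \<omega>
    using that by (simp add: E_def \<Phi>_eq indicator_def)
  have prodint: "(\<integral>x. (\<Prod>k\<in>{1..n}. f k (x k)) \<partial>?Q) = (\<Prod>k\<in>{1..n}. integral\<^sup>L ?K (f k))"
    if "\<And>k. k \<in> {1..n} \<Longrightarrow> integrable ?K (f k)" for f :: "nat \<Rightarrow> key \<Rightarrow> real"
    unfolding keys_measure_def by (rule PS.product_integral_prod) (use that in auto)
  define P' where "P' = (\<Prod>k\<in>{1..n} - {i}. integral\<^sup>L ?K (\<phi> k))"
  have \<Phi>Q: "integral\<^sup>L ?Q \<Phi> = integral\<^sup>L ?K (\<phi> i) * P'"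
  proof -
    have "integral\<^sup>L ?Q \<Phi> = (\<Prod>k\<in>{1..n}. integral\<^sup>L ?K (\<phi> k))"
      unfolding \<Phi>_def by (rule prodint) (rule \<phi>_int)
    also have "\<dots> = integral\<^sup>L ?K (\<phi> i) * P'"
      unfolding P'_def using in_n by (simp add: prod.remove)
    finally show ?thesis .
  qed
  have int_i: "integral\<^sup>L ?K (\<phi> i) = pmf (\<mu> i) (yk i)"
    using K1[OF supp_k y_k[OF i]] i by (simp add: \<phi>_def)
  define \<psi> where "\<psi> k = (if k = i then (\<lambda>\<xi>. \<phi> i \<xi> * dcost N (yk i) \<xi>) else \<phi> k)" for k
  have \<psi>_int: "integrable ?K (\<psi> k)" for k
  proof (cases "k = i")
    case True
    show ?thesis unfolding \<psi>_def using True
    proof (simp, intro K_integrable[where B=1])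
      fix u :: real and \<pi> assume "u \<in> {0..1}" "\<pi> \<in> perms N"
      then have "\<bar>dcost N (yk i) (u, \<pi>)\<bar> \<le> 1" using dcost_bound y_k[OF i] by blast
      then show "\<bar>\<phi> i (u, \<pi>) * dcost N (yk i) (u, \<pi>)\<bar> \<le> 1"
        using \<phi>_bnd[of i "(u, \<pi>)"] by (simp add: abs_mult mult_le_one)
    qed measurable
  next
    case False
    then show ?thesis unfolding \<psi>_def using \<phi>_int by simp
  qed
  have \<Psi>Q: "(\<integral>x. \<Phi> x * dcost N (yk i) (x i) \<partial>?Q) = integral\<^sup>L ?K (\<psi> i) * P'"
  proof -
    have eq: "\<Phi> x * dcost N (yk i) (x i) = (\<Prod>k\<in>{1..n}. \<psi> k (x k))" for x
    proof -
      have "(\<Prod>k\<in>{1..n}. \<psi> k (x k)) = \<psi> i (x i) * (\<Prod>k\<in>{1..n} - {i}. \<psi> k (x k))"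
        using in_n by (simp add: prod.remove)
      also have "(\<Prod>k\<in>{1..n} - {i}. \<psi> k (x k)) = (\<Prod>k\<in>{1..n} - {i}. \<phi> k (x k))"
        by (intro prod.cong) (auto simp: \<psi>_def)
      also have "\<Phi> x = \<phi> i (x i) * (\<Prod>k\<in>{1..n} - {i}. \<phi> k (x k))"
        unfolding \<Phi>_def using in_n by (simp add: prod.remove)
      ultimately show ?thesis by (simp add: \<psi>_def)
    qed
    have "(\<integral>x. \<Phi> x * dcost N (yk i) (x i) \<partial>?Q) = (\<Prod>k\<in>{1..n}. integral\<^sup>L ?K (\<psi> k))"
      unfolding eq by (rule prodint) (rule \<psi>_int)
    also have "\<dots> = integral\<^sup>L ?K (\<psi> i) * (\<Prod>k\<in>{1..n} - {i}. integral\<^sup>L ?K (\<psi> k))"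
      using in_n by (simp add: prod.remove)
    also have "(\<Prod>k\<in>{1..n} - {i}. integral\<^sup>L ?K (\<psi> k)) = P'"
      unfolding P'_def by (intro prod.cong) (auto simp: \<psi>_def)
    finally show ?thesis .
  qed
  have int_\<psi>i: "integral\<^sup>L ?K (\<psi> i) = - C0 N * (1 - pmf (\<mu> i) (yk i)) * pmf (\<mu> i) (yk i)"
    using K2[OF supp_k y_k[OF i]] i by (simp add: \<psi>_def \<phi>_def)
  have DQ: "(\<integral>x. dcost N (yk i) (x j) \<partial>?Q) = 0"
  proof -
    define chf where "chf k = (if k = j then dcost N (yk i) else (\<lambda>_. 1::real))" for k
    have chf_int: "integrable ?K (chf k)" for k
    proof (cases "k = j")
      case True
      show ?thesis unfolding chf_def using True
        by (simp, intro K_integrable[where B=1, OF dcost_meas]) (use dcost_bound y_k[OF i] in auto)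
    next
      case False
      then show ?thesis unfolding chf_def
        using finite_measure.integrable_const[of "key_measure N"] prob_K by (simp add: prob_space_def)
    qed
    have eq: "dcost N (yk i) (x j) = (\<Prod>k\<in>{1..n}. chf k (x k))" for x
    proof -
      have "(\<Prod>k\<in>{1..n}. chf k (x k)) = chf j (x j) * (\<Prod>k\<in>{1..n} - {j}. chf k (x k))"
        using j by (simp add: prod.remove)
      also have "(\<Prod>k\<in>{1..n} - {j}. chf k (x k)) = 1"
        by (intro prod.neutral) (auto simp: chf_def)
      finally show ?thesis by (simp add: chf_def)
    qed
    have "(\<integral>x. dcost N (yk i) (x j) \<partial>?Q) = (\<Prod>k\<in>{1..n}. integral\<^sup>L ?K (chf k))"
      unfolding eq by (rule prodint) (rule chf_int)
    also have "\<dots> = integral\<^sup>L ?K (chf j) * (\<Prod>k\<in>{1..n} - {j}. integral\<^sup>L ?K (chf k))"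
      using j by (simp add: prod.remove)
    also have "integral\<^sup>L ?K (chf j) = 0"
      using K3[OF y_k[OF i]] by (simp add: chf_def)
    finally show ?thesis by simp
  qed
  have probQ: "prob_space ?Q" by (rule prob_Q)
  have Q1: "(\<integral>x. (1::real) \<partial>?Q) = 1"
    using prob_space.prob_space[OF probQ] by simp
  have AEbnd_j: "AE x in ?Q. \<bar>dcost N (yk i) (x j)\<bar> \<le> 1"
    using AE_Q_good
  proof eventually_elim
    case (elim x)
    then show ?case using j dcost_bound'[OF _ y_k[OF i]] by blast
  qed
  have AEbnd_i: "AE x in ?Q. \<bar>\<Phi> x * dcost N (yk i) (x i)\<bar> \<le> 1"
    using AE_Q_good
  proof eventually_elim
    case (elim x)
    then have "\<bar>dcost N (yk i) (x i)\<bar> \<le> 1" using in_n dcost_bound'[OF _ y_k[OF i]] by blast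
    then show ?case using \<Phi>_bnd[of x] by (simp add: abs_mult mult_le_one)
  qed
  have dj_meas[measurable]: "(\<lambda>x. dcost N (yk i) (x j)) \<in> borel_measurable ?Q"
    by (rule measurable_compose[OF comp_meas[OF j] dcost_meas])
  have di_meas[measurable]: "(\<lambda>x. \<Phi> x * dcost N (yk i) (x i)) \<in> borel_measurable ?Q"
    by (rule borel_measurable_times[OF \<Phi>_meas measurable_compose[OF comp_meas[OF in_n] dcost_meas]])
  have one_meas: "(\<lambda>_. 1::real) \<in> borel_measurable ?Q" by simp
  have ae\<Phi>: "AE x in ?Q. \<bar>\<Phi> x\<bar> \<le> 1" by (rule AE_I2) (rule \<Phi>_bnd)
  have ae1: "AE x in ?Q. \<bar>1::real\<bar> \<le> 1" by simp
  have T0: "(\<integral>\<omega>. indicator E \<omega> \<partial>?M) = integral\<^sup>L ?Q \<Phi>"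
  proof -
    have "(\<integral>\<omega>. indicator E \<omega> \<partial>?M) = (\<integral>\<omega>. \<Phi> (fst \<omega>) * (\<lambda>_. 1::real) (snd \<omega>) \<partial>?M)"
      by (rule Bochner_Integration.integral_cong[OF refl]) (simp add: ind_eq)
    also have "\<dots> = integral\<^sup>L ?Q \<Phi> * (\<integral>x. (1::real) \<partial>?Q)"
      by (rule pair_prod_integral[OF probQ probQ \<Phi>_meas one_meas ae\<Phi> ae1])
    finally show ?thesis using Q1 by simp
  qed
  have I1: "integrable ?M (\<lambda>\<omega>. \<Phi> (fst \<omega>) * dcost N (yk i) (snd \<omega> j))"
    by (rule pair_prod_integrable[OF probQ probQ \<Phi>_meas dj_meas ae\<Phi> AEbnd_j])
  have I2: "integrable ?M (\<lambda>\<omega>. \<Phi> (fst \<omega>) * dcost N (yk i) (fst \<omega> i))"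
    using pair_prod_integrable[OF probQ probQ di_meas one_meas AEbnd_i ae1] by simp
  have T1: "(\<integral>\<omega>. \<Phi> (fst \<omega>) * dcost N (yk i) (snd \<omega> j) \<partial>?M) = 0"
  proof -
    have "(\<integral>\<omega>. \<Phi> (fst \<omega>) * dcost N (yk i) (snd \<omega> j) \<partial>?M) = integral\<^sup>L ?Q \<Phi> * (\<integral>x. dcost N (yk i) (x j) \<partial>?Q)"
      by (rule pair_prod_integral[OF probQ probQ \<Phi>_meas dj_meas ae\<Phi> AEbnd_j])
    then show ?thesis using DQ by simp
  qed
  have T2: "(\<integral>\<omega>. \<Phi> (fst \<omega>) * dcost N (yk i) (fst \<omega> i) \<partial>?M) = integral\<^sup>L ?K (\<psi> i) * P'"
  proof -
    have "(\<integral>\<omega>. \<Phi> (fst \<omega>) * dcost N (yk i) (fst \<omega> i) \<partial>?M)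
        = (\<integral>x. \<Phi> x * dcost N (yk i) (x i) \<partial>?Q) * (\<integral>x. (1::real) \<partial>?Q)"
      using pair_prod_integral[OF probQ probQ di_meas one_meas AEbnd_i ae1] by simp
    then show ?thesis using Q1 \<Psi>Q by simp
  qed
  have "(\<integral>\<omega>. indicator E \<omega> *
            (dcost N (gen N p (fst \<omega>) m ! (i - 1)) (snd \<omega> j) - dcost N (gen N p (fst \<omega>) m ! (i - 1)) (fst \<omega> i)) \<partial>?M)
      = (\<integral>\<omega>. \<Phi> (fst \<omega>) * dcost N (yk i) (snd \<omega> j) - \<Phi> (fst \<omega>) * dcost N (yk i) (fst \<omega> i) \<partial>?M)"
  proof (rule Bochner_Integration.integral_cong[OF refl])
    fix \<omega> assume w: "\<omega> \<in> space ?M"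
    show "indicator E \<omega> * (dcost N (gen N p (fst \<omega>) m ! (i - 1)) (snd \<omega> j) - dcost N (gen N p (fst \<omega>) m ! (i - 1)) (fst \<omega> i))
        = \<Phi> (fst \<omega>) * dcost N (yk i) (snd \<omega> j) - \<Phi> (fst \<omega>) * dcost N (yk i) (fst \<omega> i)"
    proof (cases "\<omega> \<in> E")
      case True
      then have "gen N p (fst \<omega>) m = ys" by (simp add: E_def)
      then show ?thesis using ind_eq[OF w] True by (simp add: yk_def right_diff_distrib)
    next
      case False
      then show ?thesis using ind_eq[OF w] by simp
    qed
  qed
  also have "\<dots> = 0 - integral\<^sup>L ?K (\<psi> i) * P'"
    using Bochner_Integration.integral_diff[OF I1 I2] T1 T2 by simp
  also have "\<dots> = C0 N * (1 - pmf (\<mu> i) (yk i)) * (integral\<^sup>L ?K (\<phi> i) * P')"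
    using int_\<psi>i int_i by simp
  also have "\<dots> = C0 N * (1 - pmf (\<mu> i) (yk i)) * (\<integral>\<omega>. indicator E \<omega> \<partial>?M)"
    using T0 \<Phi>Q by simp
  finally show ?thesis by (simp add: E_def \<mu>_def yk_def)
qed



theorem lemma3:
  fixes N m n :: nat and p :: "nat list \<Rightarrow> nat pmf"
  assumes p_supp: "\<And>xs. set xs \<subseteq> {1..N} \<Longrightarrow> set_pmf (p xs) \<subseteq> {1..N}"
    and mn: "m \<le> n"
  defines "M \<equiv> keys_measure N n \<Otimes>\<^sub>M keys_measure N n"
    and "Y \<equiv> (\<lambda>\<omega>. gen N p (fst \<omega>) m)"
  shows "AE \<omega> in M. \<forall>i\<in>{1..m}. \<forall>j\<in>{1..n}.
           real_cond_exp M (vimage_algebra (space M) Y (count_space UNIV))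
             (\<lambda>\<omega>'. dcost N (Y \<omega>' ! (i - 1)) (snd \<omega>' j) - dcost N (Y \<omega>' ! (i - 1)) (fst \<omega>' i)) \<omega>
           = C0 N * (1 - pmf (p (take (i - 1) (Y \<omega>))) (Y \<omega> ! (i - 1)))"
proof -
  have N1: "N \<ge> 1"
  proof -
    have s: "set_pmf (p []) \<subseteq> {1..N}" using p_supp by simp
    obtain x where "x \<in> set_pmf (p [])" using set_pmf_not_empty[of "p []"] by blast
    then show ?thesis using s by auto
  qed
  let ?Q = "keys_measure N n"
  have probQ: "prob_space ?Q" by (rule prob_Q)
  have probM: "prob_space M" unfolding M_def by (rule prob_space_pair[OF probQ probQ])
  interpret PM: prob_space M by (rule probM)
  have Ymeas: "Y \<in> M \<rightarrow>\<^sub>M count_space UNIV"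
    unfolding Y_def M_def by (rule measurable_compose[OF measurable_fst gen_meas[OF mn]])
  define R where "R = {ys. set ys \<subseteq> {1..N} \<and> length ys = m}"
  have finR: "finite R" unfolding R_def by (rule finite_lists_length_eq) simp
  have AEgood: "AE \<omega> in M. (\<forall>k\<in>{1..n}. fst \<omega> k \<in> good N) \<and> (\<forall>k\<in>{1..n}. snd \<omega> k \<in> good N)"
    unfolding M_def by (rule AE_M_good)
  have YR: "Y \<omega> \<in> R" if "\<forall>k\<in>{1..n}. fst \<omega> k \<in> good N" for \<omega>
  proof -
    have "set (gen N p (fst \<omega>) m) \<subseteq> {1..N}"
      by (rule gen_range[OF p_supp _ N1 mn]) (use that in \<open>auto simp: good_def\<close>)
    then show ?thesis unfolding R_def Y_def by (simp add: gen_length)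
  qed
  define F where "F = vimage_algebra (space M) Y (count_space UNIV)"
  have setsF: "sets F = {Y -` A \<inter> space M | A. A \<in> sets (count_space UNIV)}"
    unfolding F_def by (rule sets_vimage_algebra2) simp
  have subalg: "subalgebra M F"
    unfolding subalgebra_def
  proof
    show "sets F \<subseteq> sets M" using setsF measurable_sets[OF Ymeas] by auto
    show "space F = space M" by (simp add: F_def)
  qed
  have sfs: "sigma_finite_subalgebra M F"
    apply (rule finite_measure_subalgebra_is_sigma_finite)
    unfolding finite_measure_subalgebra_def finite_measure_subalgebra_axioms_def
    using probM subalg by (simp add: prob_space_def)
  have Esets: "{\<omega> \<in> space M. Y \<omega> = ys} \<in> sets M" for ys
  proof -
    have "{\<omega> \<in> space M. Y \<omega> = ys} = Y -` {ys} \<inter> space M" by auto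
    also have "\<dots> \<in> sets M" by (rule measurable_sets[OF Ymeas]) simp
    finally show ?thesis .
  qed
  show ?thesis unfolding F_def[symmetric]
  proof (intro AE_finite_allI finite_atLeastAtMost)
    fix i j assume i: "i \<in> {1..m}" and j: "j \<in> {1..n}"
    have in_n: "i \<in> {1..n}" using i mn by auto
    let ?f = "\<lambda>\<omega>'. dcost N (Y \<omega>' ! (i - 1)) (snd \<omega>' j) - dcost N (Y \<omega>' ! (i - 1)) (fst \<omega>' i)"
    let ?g = "\<lambda>\<omega>. C0 N * (1 - pmf (p (take (i - 1) (Y \<omega>))) (Y \<omega> ! (i - 1)))"
    have fmeas: "?f \<in> borel_measurable M"
    proof -
      have a: "(\<lambda>\<omega>. snd \<omega> j) \<in> M \<rightarrow>\<^sub>M key_measure N"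
        unfolding M_def by (rule measurable_compose[OF measurable_snd comp_meas[OF j]])
      have b: "(\<lambda>\<omega>. fst \<omega> i) \<in> M \<rightarrow>\<^sub>M key_measure N"
        unfolding M_def by (rule measurable_compose[OF measurable_fst comp_meas[OF in_n]])
      have "(\<lambda>\<omega>. (\<lambda>l \<omega>. dcost N (l ! (i - 1)) (snd \<omega> j) - dcost N (l ! (i - 1)) (fst \<omega> i)) (Y \<omega>) \<omega>) \<in> borel_measurable M"
      proof (rule measurable_compose_countable[OF _ Ymeas])
        fix l :: "nat list"
        show "(\<lambda>\<omega>. dcost N (l ! (i - 1)) (snd \<omega> j) - dcost N (l ! (i - 1)) (fst \<omega> i)) \<in> borel_measurable M"
          by (intro borel_measurable_diff measurable_compose[OF a dcost_meas] measurable_compose[OF b dcost_meas])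
      qed
      then show ?thesis by simp
    qed
    have gmeasF: "?g \<in> borel_measurable F"
    proof -
      have "Y \<in> F \<rightarrow>\<^sub>M count_space UNIV" unfolding F_def by (rule measurable_vimage_algebra1) simp
      then show ?thesis by (rule measurable_compose) simp
    qed
    have gmeas: "?g \<in> borel_measurable M" by (rule measurable_compose[OF Ymeas]) simp
    have AEf: "AE \<omega> in M. norm (?f \<omega>) \<le> 2"
      using AEgood
    proof eventually_elim
      case (elim \<omega>)
      have "Y \<omega> \<in> R" using YR elim by blast
      then have "i - 1 < length (Y \<omega>)" "set (Y \<omega>) \<subseteq> {1..N}" using i by (auto simp: R_def)
      then have y: "Y \<omega> ! (i - 1) \<in> {1..N}" using nth_mem by blast
      have 1: "\<bar>dcost N (Y \<omega> ! (i - 1)) (snd \<omega> j)\<bar> \<le> 1" using dcost_bound'[OF _ y] elim j by blast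
      have 2: "\<bar>dcost N (Y \<omega> ! (i - 1)) (fst \<omega> i)\<bar> \<le> 1" using dcost_bound'[OF _ y] elim in_n by blast
      show ?case using 1 2 abs_triangle_ineq4[of "dcost N (Y \<omega> ! (i - 1)) (snd \<omega> j)" "dcost N (Y \<omega> ! (i - 1)) (fst \<omega> i)"]
        by simp
    qed
    have fint: "integrable M ?f" by (rule PM.integrable_const_bound[OF AEf fmeas])
    have gint: "integrable M ?g"
    proof (rule PM.integrable_const_bound[where B="\<bar>C0 N\<bar>", OF AE_I2 gmeas])
      fix \<omega>
      have "0 \<le> 1 - pmf (p (take (i - 1) (Y \<omega>))) (Y \<omega> ! (i - 1))" "1 - pmf (p (take (i - 1) (Y \<omega>))) (Y \<omega> ! (i - 1)) \<le> 1"
        by (simp_all add: pmf_le_1)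
      then show "norm (?g \<omega>) \<le> \<bar>C0 N\<bar>"
        by (simp add: abs_mult mult_left_le)
    qed
    show "AE \<omega> in M. real_cond_exp M F ?f \<omega> = ?g \<omega>"
    proof (rule sigma_finite_subalgebra.real_cond_exp_charact[OF sfs _ fint gint gmeasF])
      fix A assume A: "A \<in> sets F"
      then obtain B where AB: "A = Y -` B \<inter> space M" using setsF by auto
      have AM: "A \<in> sets M" using A subalg by (auto simp: subalgebra_def)
      have decomp: "(\<integral>x\<in>A. h x \<partial>M) = (\<Sum>ys\<in>R \<inter> B. \<integral>\<omega>. indicator {\<omega> \<in> space M. Y \<omega> = ys} \<omega> * h \<omega> \<partial>M)"
        if hint: "integrable M h" for h :: "_ \<Rightarrow> real"
      proof -
        have hm[measurable]: "h \<in> borel_measurable M" using hint by simp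
        have Em[measurable]: "\<And>ys. {\<omega> \<in> space M. Y \<omega> = ys} \<in> sets M" by (rule Esets)
        have "(\<integral>x\<in>A. h x \<partial>M) = (\<integral>\<omega>. (\<Sum>ys\<in>R \<inter> B. indicator {\<omega> \<in> space M. Y \<omega> = ys} \<omega> * h \<omega>) \<partial>M)"
          unfolding set_lebesgue_integral_def
        proof (rule integral_cong_AE)
          show "(\<lambda>x. indicator A x *\<^sub>R h x) \<in> borel_measurable M"
            using AM by measurable
          show "(\<lambda>\<omega>. \<Sum>ys\<in>R \<inter> B. indicator {\<omega> \<in> space M. Y \<omega> = ys} \<omega> * h \<omega>) \<in> borel_measurable M"
            by measurable
          show "AE \<omega> in M. indicator A \<omega> *\<^sub>R h \<omega> = (\<Sum>ys\<in>R \<inter> B. indicator {\<omega> \<in> space M. Y \<omega> = ys} \<omega> * h \<omega>)"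
            using AEgood
          proof eventually_elim
            case (elim \<omega>)
            show ?case
            proof (cases "\<omega> \<in> space M")
              case True
              have YRw: "Y \<omega> \<in> R" using YR elim by blast
              have "(\<Sum>ys\<in>R \<inter> B. indicator {\<omega> \<in> space M. Y \<omega> = ys} \<omega> * h \<omega>)
                  = (\<Sum>ys\<in>R \<inter> B. (if Y \<omega> = ys then h \<omega> else 0))"
                using True by (intro sum.cong) (auto simp: indicator_def)
              also have "\<dots> = (if Y \<omega> \<in> R \<inter> B then h \<omega> else 0)"
                using finR by simp
              finally show ?thesis using True YRw AB by (auto simp: indicator_def)
            next
              case False
              then show ?thesis using AB by (simp add: indicator_def)
            qed
          qed
        qed
        also have "\<dots> = (\<Sum>ys\<in>R \<inter> B. \<integral>\<omega>. indicator {\<omega> \<in> space M. Y \<omega> = ys} \<omega> * h \<omega> \<partial>M)"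
        proof (rule Bochner_Integration.integral_sum)
          fix ys
          show "integrable M (\<lambda>\<omega>. indicator {\<omega> \<in> space M. Y \<omega> = ys} \<omega> * h \<omega>)"
            using integrable_mult_indicator[OF Esets hint, of ys] by simp
        qed
        finally show ?thesis .
      qed
      have "(\<integral>x\<in>A. ?f x \<partial>M) = (\<Sum>ys\<in>R \<inter> B. \<integral>\<omega>. indicator {\<omega> \<in> space M. Y \<omega> = ys} \<omega> * ?f \<omega> \<partial>M)"
        by (rule decomp[OF fint])
      also have "\<dots> = (\<Sum>ys\<in>R \<inter> B. \<integral>\<omega>. indicator {\<omega> \<in> space M. Y \<omega> = ys} \<omega> * ?g \<omega> \<partial>M)"
      proof (rule sum.cong[OF refl])
        fix ys assume ys: "ys \<in> R \<inter> B"
        have ysl: "length ys = m" and yss: "set ys \<subseteq> {1..N}" using ys by (auto simp: R_def)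
        have c: "(\<integral>\<omega>. indicator {\<omega> \<in> space M. Y \<omega> = ys} \<omega> * ?f \<omega> \<partial>M)
            = C0 N * (1 - pmf (p (take (i - 1) ys)) (ys ! (i - 1))) *
              (\<integral>\<omega>. indicator {\<omega> \<in> space M. Y \<omega> = ys} \<omega> \<partial>M)"
          unfolding M_def Y_def by (rule core[OF p_supp mn ysl yss i j])
        have "(\<integral>\<omega>. indicator {\<omega> \<in> space M. Y \<omega> = ys} \<omega> * ?g \<omega> \<partial>M)
            = (\<integral>\<omega>. C0 N * (1 - pmf (p (take (i - 1) ys)) (ys ! (i - 1))) * indicator {\<omega> \<in> space M. Y \<omega> = ys} \<omega> \<partial>M)"
          by (rule Bochner_Integration.integral_cong[OF refl]) (auto simp: indicator_def)
        also have "\<dots> = C0 N * (1 - pmf (p (take (i - 1) ys)) (ys ! (i - 1))) *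
              (\<integral>\<omega>. indicator {\<omega> \<in> space M. Y \<omega> = ys} \<omega> \<partial>M)"
          by simp
        finally show "(\<integral>\<omega>. indicator {\<omega> \<in> space M. Y \<omega> = ys} \<omega> * ?f \<omega> \<partial>M)
            = (\<integral>\<omega>. indicator {\<omega> \<in> space M. Y \<omega> = ys} \<omega> * ?g \<omega> \<partial>M)"
          using c by simp
      qed
      also have "\<dots> = (\<integral>x\<in>A. ?g x \<partial>M)"
        by (rule decomp[OF gint, symmetric])
      finally show "(\<integral>x\<in>A. ?f x \<partial>M) = (\<integral>x\<in>A. ?g x \<partial>M)" .
    qed
  qed
qed



end
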